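(* Let $s\in\mathbb N$ and $k,n\in\mathbb N_0$. (i) For $s\le j\le n/2$ and $1\le\ell\le a^d_{n-2j}$, $$P^{-s,n}_{j,\ell}(x)=\frac{(1-n-\frac d2)_j}{(-j)_s\,(1-n-\frac d2+2s)_{j-s}}(\|x\|^2-1)^s\,P^{s,n-2s}_{j-s,\ell}(x).$$ (ii) For $0\le j\le n/2$ and $1\le\ell\le a^d_{n-2j}$, $$\Delta^kP^{-s,n}_{j,\ell}(x)=4^k(n+\tfrac d2-2k)_{2k}\,P^{2k-s,n-2k}_{j-k,\ell}(x)+q(\|x\|^2)\,Y^{n-2j}_\ell(x),$$ where $q$ is a univariate polynomial of degree at most $j_0-k-1$ (so $q=0$ if $j_0-k-1<0$), with $j_0=s+j-n-\frac d2+1$ if this number belongs to $\{1,2,\dots,j\}$ and $j_0=0$ otherwise. In particular $q=0$ if $j+k\ge s$.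
   Context: $(a)_0=1$, $(a)_m=a(a+1)\cdots(a+m-1)$. $\mathcal H^d_m$: homogeneous harmonic polynomials of degree $m$ in $d$ variables, $a^d_m=\dim\mathcal H^d_m$, $\{Y^m_\ell\}_{\ell=1}^{a^d_m}$ a basis of $\mathcal H^d_m$ orthonormal in $L^2$ of the normalized surface measure on $\mathbb S^{d-1}$. Generalized Jacobi polynomials: for $\alpha,\beta\in\mathbb R$, $j\in\mathbb N_0$, let $j_0=-j-\alpha-\beta$ if this number lies in $\{1,\dots,j\}$ and $j_0=0$ otherwise; $\widehat P^{(\alpha,\beta)}_j(t)=\sum_{k=j_0}^j\frac{(k+\alpha+1)_{j-k}}{(j-k)!\,k!\,(j+\alpha+\beta+k+1)_{j-k}}\big(\frac{t-1}2\big)^k$, and $\widehat P^{(\alpha,\beta)}_j=0$ for negative integers $j$. For $\mu\in\mathbb R$, $n\in\mathbb N_0$, $0\le j\le n/2$, $1\le\ell\le a^d_{n-2j}$: $P^{\mu,n}_{j,\ell}(x)=(n-j+\tfrac d2)_j\,\widehat P^{(\mu,n-2j+\frac d2-1)}_j(2\|x\|^2-1)\,Y^{n-2j}_\ell(x)$; by convention $P^{\mu,n}_{j,\ell}=0$ if $j<0$ or $j>n/2$. Note $P^{2k-s,n-2k}_{j-k,\ell}$ involves the harmonic $Y^{n-2j}_\ell$. *)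

theory Defs
  imports "HOL-Analysis.Analysis" "HOL-Computational_Algebra.Polynomial"
begin

text \<open>Points of R^d are vectors of type real^'d, with d = CARD('d).\<close>

definition partial_deriv :: "'d::finite \<Rightarrow> (real^'d \<Rightarrow> real) \<Rightarrow> real^'d \<Rightarrow> real" where
  "partial_deriv i f x = deriv (\<lambda>t. f (x + t *\<^sub>R axis i 1)) 0"

definition laplacian :: "(real^'d::finite \<Rightarrow> real) \<Rightarrow> real^'d \<Rightarrow> real" where
  "laplacian f x = (\<Sum>i\<in>UNIV. partial_deriv i (partial_deriv i f) x)"

definition homogeneous_poly :: "nat \<Rightarrow> (real^'d::finite \<Rightarrow> real) \<Rightarrow> bool" where
  "homogeneous_poly m Y \<longleftrightarrow>
     (\<exists>c :: ('d \<Rightarrow> nat) \<Rightarrow> real.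
        Y = (\<lambda>x. \<Sum>\<alpha>\<in>{\<alpha>. sum \<alpha> UNIV = m}. c \<alpha> * (\<Prod>i\<in>UNIV. (x $ i) ^ \<alpha> i)))"

definition harmonic_space :: "nat \<Rightarrow> (real^'d::finite \<Rightarrow> real) set" where
  "harmonic_space m = {Y. homogeneous_poly m Y \<and> laplacian Y = (\<lambda>_. 0)}"

definition jac_j0 :: "real \<Rightarrow> real \<Rightarrow> nat \<Rightarrow> nat" where
  "jac_j0 a b j = (if \<exists>m::nat. 1 \<le> m \<and> m \<le> j \<and> real m = - real j - a - b
                   then nat \<lfloor>- real j - a - b\<rfloor> else 0)"

definition gen_jacobi :: "real \<Rightarrow> real \<Rightarrow> int \<Rightarrow> real \<Rightarrow> real" where
  "gen_jacobi a b j t = (if j < 0 then 0 else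
     (\<Sum>k = jac_j0 a b (nat j)..nat j.
        pochhammer (real k + a + 1) (nat j - k)
        / (fact (nat j - k) * fact k * pochhammer (real (nat j) + a + b + real k + 1) (nat j - k))
        * ((t - 1) / 2) ^ k))"

text \<open>P^{mu,n}_{j,l}(x), where the harmonic Y plays the role of Y^{n-2j}_l;
  zero if j < 0 or j > n/2.\<close>
definition Pbasis :: "real \<Rightarrow> int \<Rightarrow> int \<Rightarrow> (real^'d::finite \<Rightarrow> real) \<Rightarrow> real^'d \<Rightarrow> real" where
  "Pbasis \<mu> n j Y x = (if 0 \<le> j \<and> 2 * j \<le> n then
      pochhammer (real_of_int (n - j) + real CARD('d) / 2) (nat j)
      * gen_jacobi \<mu> (real_of_int (n - 2 * j) + real CARD('d) / 2 - 1) j (2 * (norm x)\<^sup>2 - 1)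
      * Y x
    else 0)"

end

theory Submission
  imports Defs
begin


lemma pd_eq:
  fixes f :: "real^'d::finite \<Rightarrow> real"
  assumes "(f has_derivative f') (at x)"
  shows "partial_deriv i f x = f' (axis i 1)"
proof -
  have bl: "bounded_linear f'" using assms has_derivative_bounded_linear by blast
  have hg: "((\<lambda>t::real. x + t *\<^sub>R axis i 1) has_derivative (\<lambda>t. t *\<^sub>R axis i 1)) (at 0)"
    by (auto intro!: derivative_eq_intros)
  have hf: "(f has_derivative f') (at ((\<lambda>t::real. x + t *\<^sub>R axis i 1) 0))" using assms by simp
  have "((f \<circ> (\<lambda>t::real. x + t *\<^sub>R axis i 1)) has_derivative (f' \<circ> (\<lambda>t. t *\<^sub>R axis i 1))) (at 0)"
    using has_derivative_compose[OF hg hf] by (simp add: o_def)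
  moreover have "(f' \<circ> (\<lambda>t. t *\<^sub>R axis i 1)) = (\<lambda>t. f' (axis i 1) * t)"
    using linear_scale[OF bounded_linear.linear[OF bl]] by (auto simp: fun_eq_iff)
  ultimately have "((\<lambda>t. f (x + t *\<^sub>R axis i 1)) has_real_derivative f' (axis i 1)) (at 0)"
    by (simp add: has_field_derivative_def o_def)
  then show ?thesis unfolding partial_deriv_def by (rule DERIV_imp_deriv)
qed

inductive polyfun :: "(real^'d::finite \<Rightarrow> real) \<Rightarrow> bool" where
  pf_const: "polyfun (\<lambda>x. c)"
| pf_coord: "polyfun (\<lambda>x. x $ i)"
| pf_add: "polyfun f \<Longrightarrow> polyfun g \<Longrightarrow> polyfun (\<lambda>x. f x + g x)"
| pf_mult: "polyfun f \<Longrightarrow> polyfun g \<Longrightarrow> polyfun (\<lambda>x. f x * g x)"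

lemma polyfun_deriv:
  assumes "polyfun f"
  shows "\<exists>f'. (\<forall>x. (f has_derivative f' x) (at x)) \<and> (\<forall>v. polyfun (\<lambda>x. f' x v))"
  using assms
proof induction
  case (pf_const c)
  then show ?case by (intro exI[of _ "\<lambda>x h. 0"]) (auto intro: polyfun.intros)
next
  case (pf_coord i)
  show ?case
    by (intro exI[of _ "\<lambda>x h. h $ i"]) (auto intro!: polyfun.intros bounded_linear_imp_has_derivative bounded_linear_vec_nth)
next
  case (pf_add f g)
  then obtain f' g' where "\<forall>x. (f has_derivative f' x) (at x)" "\<forall>v. polyfun (\<lambda>x. f' x v)"
     "\<forall>x. (g has_derivative g' x) (at x)" "\<forall>v. polyfun (\<lambda>x. g' x v)" by blast
  then show ?case
    by (intro exI[of _ "\<lambda>x h. f' x h + g' x h"]) (auto intro!: polyfun.intros has_derivative_add)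
next
  case (pf_mult f g)
  then obtain f' g' where "\<forall>x. (f has_derivative f' x) (at x)" "\<forall>v. polyfun (\<lambda>x. f' x v)"
     "\<forall>x. (g has_derivative g' x) (at x)" "\<forall>v. polyfun (\<lambda>x. g' x v)" by blast
  then show ?case
    by (intro exI[of _ "\<lambda>x h. f x * g' x h + f' x h * g x"])
       (auto intro!: polyfun.intros has_derivative_mult pf_mult)
qed

lemma polyfun_diff: "polyfun f \<Longrightarrow> f differentiable (at x)"
  using polyfun_deriv unfolding differentiable_def by blast

lemma polyfun_pd: "polyfun f \<Longrightarrow> polyfun (partial_deriv i f)"
proof -
  assume "polyfun f"
  then obtain f' where f': "\<forall>x. (f has_derivative f' x) (at x)" "\<forall>v. polyfun (\<lambda>x. f' x v)"
    using polyfun_deriv by blast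
  have "partial_deriv i f = (\<lambda>x. f' x (axis i 1))" using f'(1) pd_eq by blast
  then show ?thesis using f'(2) by simp
qed

lemma pd_mult:
  assumes "f differentiable (at x)" "g differentiable (at x)"
  shows "partial_deriv i (\<lambda>x. f x * g x) x = partial_deriv i f x * g x + f x * partial_deriv i g x"
proof -
  obtain f' g' where "(f has_derivative f') (at x)" "(g has_derivative g') (at x)"
    using assms unfolding differentiable_def by blast
  then show ?thesis using pd_eq[of f f' x i] pd_eq[of g g' x i]
      pd_eq[OF has_derivative_mult[of f f' x UNIV g g'], of i] by simp
qed

lemma pd_add:
  assumes "f differentiable (at x)" "g differentiable (at x)"
  shows "partial_deriv i (\<lambda>x. f x + g x) x = partial_deriv i f x + partial_deriv i g x"
proof -
  obtain f' g' where "(f has_derivative f') (at x)" "(g has_derivative g') (at x)"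
    using assms unfolding differentiable_def by blast
  then show ?thesis using pd_eq[of f f' x i] pd_eq[of g g' x i]
      pd_eq[OF has_derivative_add[of f f' "at x" g g'], of i] by simp
qed

lemma pd_cmult:
  assumes "f differentiable (at x)"
  shows "partial_deriv i (\<lambda>x. c * f x) x = c * partial_deriv i f x"
proof -
  obtain f' where "(f has_derivative f') (at x)"
    using assms unfolding differentiable_def by blast
  then show ?thesis using pd_eq[of f f' x i]
      pd_eq[OF has_derivative_mult_right[of f f' "at x" c], of i] by simp
qed

lemma pd_coord: "partial_deriv i (\<lambda>x. x $ j) x = (if i = j then 1 else 0)"
proof -
  have "((\<lambda>x::real^'a. x $ j) has_derivative (\<lambda>h. h $ j)) (at x)"
    by (auto intro!: bounded_linear_imp_has_derivative bounded_linear_vec_nth)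
  then show ?thesis using pd_eq by (fastforce simp: axis_def)
qed

lemma pd_norm2: "partial_deriv i (\<lambda>x::real^'d::finite. (norm x)\<^sup>2 - 1) x = 2 * x $ i"
proof -
  have "((\<lambda>x::real^'d. x \<bullet> x - 1) has_derivative (\<lambda>h. x \<bullet> h + h \<bullet> x)) (at x)"
    by (auto intro!: derivative_eq_intros)
  then have "partial_deriv i (\<lambda>x::real^'d. x \<bullet> x - 1) x = x \<bullet> axis i 1 + axis i 1 \<bullet> x"
    by (rule pd_eq)
  then show ?thesis by (simp add: power2_norm_eq_inner inner_axis inner_commute)
qed

lemma pd_polycomp:
  assumes "f differentiable (at x)"
  shows "partial_deriv i (\<lambda>x. poly q (f x)) x = poly (pderiv q) (f x) * partial_deriv i f x"
proof -
  obtain f' where f': "(f has_derivative f') (at x)"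
    using assms unfolding differentiable_def by blast
  have "((\<lambda>x. poly q (f x)) has_derivative (\<lambda>h. poly (pderiv q) (f x) * f' h)) (at x)"
  proof -
    have "((poly q) has_derivative (\<lambda>h. poly (pderiv q) (f x) * h)) (at (f x))"
      using poly_DERIV[of q "f x"] by (simp add: has_field_derivative_def)
    from has_derivative_compose[OF f' this] show ?thesis by (simp add: o_def)
  qed
  from pd_eq[OF this, of i] pd_eq[OF f', of i] show ?thesis by simp
qed

lemma polyfun_sum: "(\<And>a. a \<in> A \<Longrightarrow> polyfun (f a)) \<Longrightarrow> polyfun (\<lambda>x. \<Sum>a\<in>A. f a x)"
proof (cases "finite A")
  case True
  then show "(\<And>a. a \<in> A \<Longrightarrow> polyfun (f a)) \<Longrightarrow> ?thesis"
    by (induction A rule: finite_induct) (auto intro: polyfun.intros)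
qed (auto intro: polyfun.intros)

lemma polyfun_prod: "(\<And>a. a \<in> A \<Longrightarrow> polyfun (f a)) \<Longrightarrow> polyfun (\<lambda>x. \<Prod>a\<in>A. f a x)"
proof (cases "finite A")
  case True
  then show "(\<And>a. a \<in> A \<Longrightarrow> polyfun (f a)) \<Longrightarrow> ?thesis"
    by (induction A rule: finite_induct) (auto intro: polyfun.intros)
qed (auto intro: polyfun.intros)

lemma polyfun_power: "polyfun f \<Longrightarrow> polyfun (\<lambda>x. f x ^ n)"
  by (induction n) (auto intro: polyfun.intros)

lemma polyfun_poly: "polyfun f \<Longrightarrow> polyfun (\<lambda>x. poly q (f x))"
  by (induction q) (auto intro: polyfun.intros)

lemma polyfun_norm2: "polyfun (\<lambda>x::real^'d::finite. (norm x)\<^sup>2 - 1)"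
proof -
  have "polyfun (\<lambda>x::real^'d. (\<Sum>i\<in>UNIV. x $ i * x $ i) + (-1))"
    by (intro pf_add polyfun_sum pf_mult pf_coord pf_const)
  moreover have "(\<lambda>x::real^'d. (\<Sum>i\<in>UNIV. x $ i * x $ i) + (-1)) = (\<lambda>x. (norm x)\<^sup>2 - 1)"
    by (auto simp: power2_norm_eq_inner inner_vec_def)
  ultimately show ?thesis by simp
qed

lemma homog_polyfun: "homogeneous_poly m Y \<Longrightarrow> polyfun Y"
  unfolding homogeneous_poly_def
  by (auto intro!: polyfun_sum pf_mult pf_const polyfun_prod polyfun_power pf_coord)

lemma homog_scale: "homogeneous_poly m Y \<Longrightarrow> Y (c *\<^sub>R x) = c ^ m * Y x"
  unfolding homogeneous_poly_def
proof (elim exE)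
  fix cf :: "('a \<Rightarrow> nat) \<Rightarrow> real"
  assume Y: "Y = (\<lambda>x. \<Sum>\<alpha>\<in>{\<alpha>. sum \<alpha> UNIV = m}. cf \<alpha> * (\<Prod>i\<in>UNIV. (x $ i) ^ \<alpha> i))"
  have "\<And>\<alpha>. \<alpha> \<in> {\<alpha>. sum \<alpha> UNIV = m} \<Longrightarrow> (\<Prod>i\<in>UNIV. ((c *\<^sub>R x) $ i) ^ \<alpha> i) = c ^ m * (\<Prod>i\<in>UNIV. (x $ i) ^ \<alpha> i)"
    by (simp add: power_mult_distrib prod.distrib flip: power_sum)
  then show ?thesis unfolding Y by (simp add: sum_distrib_left algebra_simps)
qed

lemma euler:
  assumes "homogeneous_poly m Y"
  shows "(\<Sum>i\<in>UNIV. x $ i * partial_deriv i Y x) = real m * Y x"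
proof -
  obtain Y' where Y': "\<forall>x. (Y has_derivative Y' x) (at x)"
    using polyfun_deriv[OF homog_polyfun[OF assms]] by blast
  have lin: "linear (Y' x)" using Y' has_derivative_linear by blast
  have hg: "((\<lambda>c::real. c *\<^sub>R x) has_derivative (\<lambda>c. c *\<^sub>R x)) (at 1)"
    by (auto intro!: derivative_eq_intros)
  have hY: "(Y has_derivative Y' x) (at ((\<lambda>c::real. c *\<^sub>R x) 1))" using Y' by simp
  have "((Y \<circ> (\<lambda>c::real. c *\<^sub>R x)) has_derivative (Y' x \<circ> (\<lambda>c. c *\<^sub>R x))) (at 1)"
    using has_derivative_compose[OF hg hY] by (simp add: o_def)
  moreover have "(Y' x \<circ> (\<lambda>c. c *\<^sub>R x)) = (\<lambda>c. Y' x x * c)"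
    using linear_scale[OF lin] by (auto simp: fun_eq_iff)
  ultimately have d1: "((\<lambda>c. Y (c *\<^sub>R x)) has_real_derivative Y' x x) (at 1)"
    by (simp add: has_field_derivative_def o_def)
  have "((\<lambda>c. c ^ m * Y x) has_real_derivative real m * 1 ^ (m - 1) * Y x) (at 1)"
    by (auto intro!: derivative_eq_intros)
  then have d2: "((\<lambda>c. Y (c *\<^sub>R x)) has_real_derivative real m * Y x) (at 1)"
    using homog_scale[OF assms] by simp
  have e: "Y' x x = real m * Y x" using DERIV_unique[OF d1 d2] .
  have "Y' x x = Y' x (\<Sum>i\<in>UNIV. x $ i *\<^sub>R axis i 1)"
    using basis_expansion[of x] by (simp add: scalar_mult_eq_scaleR)
  also have "\<dots> = (\<Sum>i\<in>UNIV. x $ i * Y' x (axis i 1))"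
    using lin by (simp add: linear_sum linear_scale)
  also have "\<dots> = (\<Sum>i\<in>UNIV. x $ i * partial_deriv i Y x)"
    using pd_eq Y' by metis
  finally show ?thesis using e by simp
qed

definition Lop :: "nat \<Rightarrow> nat \<Rightarrow> real poly \<Rightarrow> real poly" where
  "Lop m d g = smult 4 (pCons 0 (pderiv (pderiv g)) + pderiv (pderiv g)) + smult (4 * real m + 2 * real d) (pderiv g)"

lemma radial_lap:
  fixes Y :: "real^'d::finite \<Rightarrow> real"
  assumes Y: "Y \<in> harmonic_space m"
  shows "laplacian (\<lambda>x. poly g ((norm x)\<^sup>2 - 1) * Y x) = (\<lambda>x. poly (Lop m CARD('d) g) ((norm x)\<^sup>2 - 1) * Y x)"
proof (rule ext)
  fix x :: "real^'d"
  define N where "N = (\<lambda>x::real^'d. (norm x)\<^sup>2 - 1)"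
  define g1 where "g1 = pderiv g"
  define g2 where "g2 = pderiv g1"
  have hY: "homogeneous_poly m Y" and lY: "laplacian Y = (\<lambda>_. 0)" using Y by (auto simp: harmonic_space_def)
  have pY: "polyfun Y" by (rule homog_polyfun[OF hY])
  have pN: "polyfun N" unfolding N_def by (rule polyfun_norm2)
  have pG: "\<And>q. polyfun (\<lambda>x. poly q (N x))" by (rule polyfun_poly[OF pN])
  have pD: "\<And>i. polyfun (partial_deriv i Y)" by (rule polyfun_pd[OF pY])
  have pC: "\<And>i. polyfun (\<lambda>x::real^'d. 2 * x $ i)" by (intro pf_mult pf_const pf_coord)
  have dG: "partial_deriv i (\<lambda>x. poly q (N x)) y = poly (pderiv q) (N y) * (2 * y $ i)" for q y i
  proof -
    have "partial_deriv i (\<lambda>x. poly q (N x)) y = poly (pderiv q) (N y) * partial_deriv i N y"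
      by (rule pd_polycomp[OF polyfun_diff[OF pN]])
    also have "partial_deriv i N y = 2 * y $ i" unfolding N_def by (rule pd_norm2)
    finally show ?thesis .
  qed
  have dC: "partial_deriv i (\<lambda>x::real^'d. 2 * x $ i) y = 2" for i y
    by (simp add: pd_cmult[OF polyfun_diff[OF pf_coord]] pd_coord)
  have s1: "\<And>i. partial_deriv i (\<lambda>x. poly g (N x) * Y x) = (\<lambda>y. poly g1 (N y) * (2 * y $ i) * Y y + poly g (N y) * partial_deriv i Y y)"
    by (rule ext) (simp add: pd_mult[OF polyfun_diff[OF pG] polyfun_diff[OF pY]] dG g1_def)
  have s2: "partial_deriv i (\<lambda>y. poly g1 (N y) * (2 * y $ i) * Y y + poly g (N y) * partial_deriv i Y y) x
     = (poly g2 (N x) * (2 * x $ i) * (2 * x $ i) + poly g1 (N x) * 2) * Y x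
       + 2 * (poly g1 (N x) * (2 * x $ i) * partial_deriv i Y x)
       + poly g (N x) * partial_deriv i (partial_deriv i Y) x" for i
  proof -
    have a: "partial_deriv i (\<lambda>y. poly g1 (N y) * (2 * y $ i)) x = poly g2 (N x) * (2 * x $ i) * (2 * x $ i) + poly g1 (N x) * 2"
      by (simp add: pd_mult[OF polyfun_diff[OF pG] polyfun_diff[OF pC]] dG dC g2_def)
    have b: "partial_deriv i (\<lambda>y. poly g1 (N y) * (2 * y $ i) * Y y) x
       = (poly g2 (N x) * (2 * x $ i) * (2 * x $ i) + poly g1 (N x) * 2) * Y x + poly g1 (N x) * (2 * x $ i) * partial_deriv i Y x"
      using pd_mult[OF polyfun_diff[OF pf_mult[OF pG pC]] polyfun_diff[OF pY]] a by simp
    have c: "partial_deriv i (\<lambda>y. poly g (N y) * partial_deriv i Y y) x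
       = poly g1 (N x) * (2 * x $ i) * partial_deriv i Y x + poly g (N x) * partial_deriv i (partial_deriv i Y) x"
      using pd_mult[OF polyfun_diff[OF pG] polyfun_diff[OF pD]] dG g1_def by simp
    show ?thesis
      using pd_add[OF polyfun_diff[OF pf_mult[OF pf_mult[OF pG pC] pY]] polyfun_diff[OF pf_mult[OF pG pD]]] b c
      by simp
  qed
  have sq: "(\<Sum>i\<in>UNIV. x $ i * x $ i) = N x + 1"
    by (simp add: N_def power2_norm_eq_inner inner_vec_def)
  have lap0: "(\<Sum>i\<in>UNIV. partial_deriv i (partial_deriv i Y) x) = 0"
    using fun_cong[OF lY, of x] by (simp add: laplacian_def)
  have "laplacian (\<lambda>x. poly g (N x) * Y x) x
     = (\<Sum>i\<in>UNIV. (poly g2 (N x) * (2 * x $ i) * (2 * x $ i) + poly g1 (N x) * 2) * Y x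
       + 2 * (poly g1 (N x) * (2 * x $ i) * partial_deriv i Y x)
       + poly g (N x) * partial_deriv i (partial_deriv i Y) x)"
    unfolding laplacian_def s1 s2 by simp
  also have "\<dots> = 4 * poly g2 (N x) * Y x * (\<Sum>i\<in>UNIV. x $ i * x $ i) + 2 * real CARD('d) * poly g1 (N x) * Y x
       + 4 * poly g1 (N x) * (\<Sum>i\<in>UNIV. x $ i * partial_deriv i Y x)
       + poly g (N x) * (\<Sum>i\<in>UNIV. partial_deriv i (partial_deriv i Y) x)"
    by (simp add: sum.distrib sum_distrib_left sum_distrib_right algebra_simps)
  also have "\<dots> = poly (Lop m CARD('d) g) (N x) * Y x"
    unfolding sq lap0 euler[OF hY] by (simp add: Lop_def g1_def g2_def algebra_simps)
  finally show "laplacian (\<lambda>x. poly g ((norm x)\<^sup>2 - 1) * Y x) x = poly (Lop m CARD('d) g) ((norm x)\<^sup>2 - 1) * Y x"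
    unfolding N_def .
qed

lemma radial_lap_iter:
  fixes Y :: "real^'d::finite \<Rightarrow> real"
  assumes Y: "Y \<in> harmonic_space m"
  shows "(laplacian ^^ k) (\<lambda>x. poly g ((norm x)\<^sup>2 - 1) * Y x) = (\<lambda>x. poly ((Lop m CARD('d) ^^ k) g) ((norm x)\<^sup>2 - 1) * Y x)"
  by (induction k) (simp_all add: radial_lap[OF Y])



definition cf :: "real \<Rightarrow> real \<Rightarrow> nat \<Rightarrow> nat \<Rightarrow> real" where
  "cf \<mu> \<beta> j p = (if p \<le> j then pochhammer (real j + \<beta> + 1) j * pochhammer (real p + \<mu> + 1) (j - p)
      / (fact (j - p) * fact p * pochhammer (real j + \<mu> + \<beta> + real p + 1) (j - p)) else 0)"

lemma key_c:
  fixes \<mu> \<beta> :: real and p t :: nat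
  assumes nz1: "real (p + 2 + t) + \<mu> + \<beta> + real p + 2 \<noteq> 0"
    and nz2: "pochhammer (real (p + 2 + t) + \<mu> + \<beta> + real p + 3) t \<noteq> 0"
    and nz3: "real (p + 2 + t) + \<beta> \<noteq> 0"
  shows "4 * (real p + 1) * (real p + \<beta> + 1) * cf \<mu> \<beta> (p + 2 + t) (p + 1)
       + 4 * (real p + 1) * (real p + 2) * cf \<mu> \<beta> (p + 2 + t) (p + 2)
       = 4 * (2 * real (p + 2 + t) + \<beta> - 1) * (2 * real (p + 2 + t) + \<beta>) * cf (\<mu> + 2) \<beta> (p + 1 + t) p"
proof -
  define j where "j = p + 2 + t"
  define W where "W = real j + \<mu> + \<beta>"
  define P1 where "P1 = pochhammer (real j + \<beta> + 1) j"
  define P2 where "P2 = pochhammer (real j + \<beta>) (p + 1 + t)"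
  define X where "X = pochhammer (real p + \<mu> + 3) t"
  define Dn where "Dn = pochhammer (W + real p + 3) t"
  have e1: "j - (p + 1) = Suc t" "j - (p + 2) = t" "p + 1 + t - p = Suc t" unfolding j_def by auto
  have P12: "P1 * (real j + \<beta>) = (2 * real j + \<beta> - 1) * (2 * real j + \<beta>) * P2"
  proof -
    have "pochhammer (real j + \<beta>) (Suc j) = (real j + \<beta>) * P1"
      unfolding P1_def pochhammer_rec by (simp add: add.assoc)
    moreover have "pochhammer (real j + \<beta>) (Suc j) = (2 * real j + \<beta> - 1) * (2 * real j + \<beta>) * P2"
    proof -
      have "pochhammer (real j + \<beta>) (Suc j) = pochhammer (real j + \<beta>) (Suc (Suc (p + 1 + t)))"
        by (simp add: j_def)
      also have "\<dots> = (real j + \<beta> + real (Suc (p + 1 + t))) * ((real j + \<beta> + real (p + 1 + t)) * P2)"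
        unfolding P2_def by (simp only: pochhammer_rec' of_nat_Suc)
      also have "\<dots> = (2 * real j + \<beta> - 1) * (2 * real j + \<beta>) * P2"
        by (simp add: j_def algebra_simps)
      finally show ?thesis .
    qed
    ultimately show ?thesis by (simp add: algebra_simps)
  qed
  have pa: "pochhammer (real (p + 1) + \<mu> + 1) (Suc t) = (real p + \<mu> + 2) * X"
    unfolding X_def pochhammer_rec by (simp add: add_ac numeral_eq_Suc)
  have pb: "pochhammer (real j + \<mu> + \<beta> + real (p + 1) + 1) (Suc t) = (W + real p + 2) * Dn"
    unfolding Dn_def W_def pochhammer_rec by (simp add: add_ac numeral_eq_Suc)
  have pc: "pochhammer (real (p + 2) + \<mu> + 1) t = X"
    unfolding X_def by (simp add: add_ac numeral_eq_Suc)
  have pd: "pochhammer (real j + \<mu> + \<beta> + real (p + 2) + 1) t = Dn"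
    unfolding Dn_def W_def by (simp add: add_ac numeral_eq_Suc)
  have pe: "pochhammer (real p + (\<mu> + 2) + 1) (Suc t) = (real j + \<mu> + 1) * X"
    unfolding X_def pochhammer_rec' by (simp add: add_ac numeral_eq_Suc j_def)
  have pf: "pochhammer (real (p + 1 + t) + (\<mu> + 2) + \<beta> + real p + 1) (Suc t) = (W + real p + 2) * Dn"
    unfolding Dn_def W_def pochhammer_rec by (simp add: add_ac numeral_eq_Suc j_def)
  have pg: "pochhammer (real (p + 1 + t) + \<beta> + 1) (p + 1 + t) = P2"
    unfolding P2_def by (simp add: add_ac j_def)
  have le: "p + 1 \<le> j" "p + 2 \<le> j" "p \<le> p + 1 + t" unfolding j_def by auto
  have c1: "cf \<mu> \<beta> j (p + 1) = P1 * ((real p + \<mu> + 2) * X) / (fact (Suc t) * fact (p + 1) * ((W + real p + 2) * Dn))"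
    unfolding cf_def e1 P1_def[symmetric] using le by (simp only: if_True pa pb)
  have c2: "cf \<mu> \<beta> j (p + 2) = P1 * X / (fact t * fact (p + 2) * Dn)"
    unfolding cf_def e1 P1_def[symmetric] using le by (simp only: if_True pc pd)
  have c3: "cf (\<mu> + 2) \<beta> (p + 1 + t) p = P2 * ((real j + \<mu> + 1) * X) / (fact (Suc t) * fact p * ((W + real p + 2) * Dn))"
    unfolding cf_def e1 using le by (simp only: if_True pe pf pg)
  have nzW: "W + real p + 2 \<noteq> 0" using nz1 unfolding W_def j_def by simp
  have nzD: "Dn \<noteq> 0" using nz2 unfolding Dn_def W_def j_def by (simp add: algebra_simps)
  have nzb: "real j + \<beta> \<noteq> 0" using nz3 unfolding j_def .
  have Wd: "W = real p + 2 + real t + \<mu> + \<beta>" unfolding W_def j_def by simp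
  have jd: "real j = real p + 2 + real t" unfolding j_def by simp
  have "4 * (real p + 1) * (real p + \<beta> + 1) * cf \<mu> \<beta> j (p + 1)
       + 4 * (real p + 1) * (real p + 2) * cf \<mu> \<beta> j (p + 2)
       = 4 * (2 * real j + \<beta> - 1) * (2 * real j + \<beta>) * cf (\<mu> + 2) \<beta> (p + 1 + t) p"
  proof -
    have "4 * (2 * real j + \<beta> - 1) * (2 * real j + \<beta>) * cf (\<mu> + 2) \<beta> (p + 1 + t) p
        = 4 * ((2 * real j + \<beta> - 1) * (2 * real j + \<beta>) * P2) * ((real j + \<mu> + 1) * X) / (fact (Suc t) * fact p * ((W + real p + 2) * Dn))"
      unfolding c3 by simp
    also have "\<dots> = 4 * (P1 * (real j + \<beta>)) * ((real j + \<mu> + 1) * X) / (fact (Suc t) * fact p * ((W + real p + 2) * Dn))"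
      unfolding P12 ..
    finally have r: "4 * (2 * real j + \<beta> - 1) * (2 * real j + \<beta>) * cf (\<mu> + 2) \<beta> (p + 1 + t) p
        = 4 * (P1 * (real j + \<beta>)) * ((real j + \<mu> + 1) * X) / (fact (Suc t) * fact p * ((W + real p + 2) * Dn))" .
    define K where "K = P1 * X / (fact t * fact p * Dn)"
    have f1: "(fact (Suc t) :: real) = (real t + 1) * fact t" by simp
    have f2: "(fact (p + 1) :: real) = (real p + 1) * fact p" by simp
    have f3: "(fact (p + 2) :: real) = (real p + 2) * ((real p + 1) * fact p)"
      by (simp add: numeral_2_eq_2 algebra_simps)
    have nf: "(fact t :: real) \<noteq> 0" "(fact p :: real) \<noteq> 0" by auto
    have nn: "real t + 1 \<noteq> 0" "real p + 1 \<noteq> 0" "real p + 2 \<noteq> 0" by linarith+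
    have c1': "cf \<mu> \<beta> j (p + 1) = K * (real p + \<mu> + 2) / ((real t + 1) * (real p + 1) * (W + real p + 2))"
      unfolding c1 K_def f1 f2 using nf nn nzW nzD by (simp add: field_simps)
    have c2': "cf \<mu> \<beta> j (p + 2) = K / ((real p + 2) * (real p + 1))"
      unfolding c2 K_def f3 using nf nn nzW nzD by (simp add: field_simps)
    have r': "4 * (2 * real j + \<beta> - 1) * (2 * real j + \<beta>) * cf (\<mu> + 2) \<beta> (p + 1 + t) p
       = 4 * K * ((real j + \<beta>) * (real j + \<mu> + 1)) / ((real t + 1) * (W + real p + 2))"
      unfolding r K_def f1 using nf nn nzW nzD by (simp add: field_simps)
    have idt: "(real p + \<beta> + 1) * (real p + \<mu> + 2) + (real t + 1) * (W + real p + 2) = (real j + \<beta>) * (real j + \<mu> + 1)"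
      unfolding Wd jd by (simp add: algebra_simps)
    define Z where "Z = (real t + 1) * (W + real p + 2)"
    have nZ: "Z \<noteq> 0" unfolding Z_def using nn nzW by simp
    have sa: "4 * (real p + 1) * (real p + \<beta> + 1) * cf \<mu> \<beta> j (p + 1) = 4 * K * ((real p + \<beta> + 1) * (real p + \<mu> + 2)) / Z"
    proof -
      have "cf \<mu> \<beta> j (p + 1) = K * (real p + \<mu> + 2) / ((real p + 1) * Z)"
        unfolding c1' Z_def by (simp add: ac_simps)
      then have "4 * (real p + 1) * (real p + \<beta> + 1) * cf \<mu> \<beta> j (p + 1)
          = (4 * (real p + 1) * (real p + \<beta> + 1) * (K * (real p + \<mu> + 2))) / ((real p + 1) * Z)"
        by (simp only: times_divide_eq_right)
      also have "\<dots> = ((real p + 1) * (4 * K * ((real p + \<beta> + 1) * (real p + \<mu> + 2)))) / ((real p + 1) * Z)"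
        by (simp only: mult_ac)
      also have "\<dots> = 4 * K * ((real p + \<beta> + 1) * (real p + \<mu> + 2)) / Z"
        using nn(2) by (rule mult_divide_mult_cancel_left)
      finally show ?thesis .
    qed
    have sb: "4 * (real p + 1) * (real p + 2) * cf \<mu> \<beta> j (p + 2) = 4 * K"
    proof -
      define R where "R = (real p + 2) * (real p + 1)"
      have "R \<noteq> 0" unfolding R_def using nn by simp
      moreover have "4 * (real p + 1) * (real p + 2) * cf \<mu> \<beta> j (p + 2) = 4 * (R * (K / R))"
        unfolding c2' R_def by (simp only: mult_ac)
      ultimately show ?thesis by simp
    qed
    have r'': "4 * (2 * real j + \<beta> - 1) * (2 * real j + \<beta>) * cf (\<mu> + 2) \<beta> (p + 1 + t) p
       = 4 * K * ((real p + \<beta> + 1) * (real p + \<mu> + 2) + Z) / Z"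
      unfolding r' idt[symmetric] Z_def ..
    show ?thesis unfolding sa sb r'' using nZ by (simp add: field_simps)
  qed
  then show ?thesis unfolding j_def .
qed

definition Qp :: "real \<Rightarrow> real \<Rightarrow> nat \<Rightarrow> real poly" where
  "Qp \<mu> \<beta> j = (\<Sum>p\<le>j. monom (cf \<mu> \<beta> j p) p)"

lemma coeff_Qp: "coeff (Qp \<mu> \<beta> j) p = cf \<mu> \<beta> j p"
proof -
  have "coeff (Qp \<mu> \<beta> j) p = (\<Sum>q\<le>j. if q = p then cf \<mu> \<beta> j q else 0)"
    unfolding Qp_def by (simp add: coeff_sum coeff_monom)
  also have "\<dots> = cf \<mu> \<beta> j p" by (simp add: cf_def)
  finally show ?thesis .
qed

lemma coeff_Lop:
  assumes "\<beta> = real m + real d / 2 - 1"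
  shows "coeff (Lop m d g) p = 4 * (real p + 1) * (real p + \<beta> + 1) * coeff g (p + 1)
     + 4 * (real p + 1) * (real p + 2) * coeff g (p + 2)"
proof (cases p)
  case 0
  then show ?thesis using assms by (simp add: Lop_def coeff_pderiv numeral_2_eq_2 algebra_simps)
next
  case (Suc q)
  then show ?thesis unfolding assms by (simp add: Lop_def coeff_pderiv numeral_2_eq_2 field_simps)
qed

lemma j0_nz:
  assumes "jac_j0 a b j \<le> r" "r < j"
  shows "real j + a + b + real r + 1 \<noteq> 0"
proof
  assume e: "real j + a + b + real r + 1 = 0"
  then have "\<exists>m::nat. 1 \<le> m \<and> m \<le> j \<and> real m = - real j - a - b"
    using assms(2) by (intro exI[of _ "r + 1"]) auto
  then have "jac_j0 a b j = nat \<lfloor>- real j - a - b\<rfloor>" unfolding jac_j0_def by simp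
  also have "- real j - a - b = real (r + 1)" using e by simp
  finally have "jac_j0 a b j = r + 1" by (simp only: floor_of_nat nat_int)
  then show False using assms(1) by simp
qed

lemma j0_zero:
  assumes "k < jac_j0 a b j"
  shows "pochhammer (real j + a + b + real k + 1) (j - k) = 0"
proof -
  have ne: "jac_j0 a b j \<noteq> 0" using assms by simp
  then obtain m :: nat where m: "1 \<le> m" "m \<le> j" "real m = - real j - a - b"
    unfolding jac_j0_def by (auto split: if_splits)
  then have "jac_j0 a b j = nat \<lfloor>- real j - a - b\<rfloor>" unfolding jac_j0_def by auto
  also have "\<dots> = m" unfolding m(3)[symmetric] by simp
  finally have "k < m" using assms by simp
  then show ?thesis unfolding pochhammer_eq_0_iff
    using m by (intro exI[of _ "m - k - 1"]) (auto simp: of_nat_diff)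
qed

lemma deg_from_coeffs:
  fixes D :: "real poly"
  assumes "\<forall>p. N \<le> p + 1 \<longrightarrow> coeff D p = 0"
  shows "D = 0 \<or> degree D + 2 \<le> N"
proof (cases "D = 0")
  case False
  then have "coeff D (degree D) \<noteq> 0" by simp
  moreover have "\<not> N \<le> degree D + 1 \<or> coeff D (degree D) = 0" using assms by blast
  ultimately show ?thesis by linarith
qed simp

lemma key_b:
  fixes \<mu> \<beta> :: real and p :: nat
  shows "4 * (real p + 1) * (real p + \<beta> + 1) * cf \<mu> \<beta> (Suc p) (p + 1)
       = 4 * (2 * real (Suc p) + \<beta> - 1) * (2 * real (Suc p) + \<beta>) * cf (\<mu> + 2) \<beta> p p"
proof -
  have e: "(real p + \<beta> + 1) * pochhammer (real p + \<beta> + 2) (Suc p)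
     = pochhammer (real p + \<beta> + 1) p * (2 * real p + \<beta> + 1) * (2 * real p + \<beta> + 2)"
  proof -
    have "(real p + \<beta> + 1) * pochhammer (real p + \<beta> + 2) (Suc p) = pochhammer (real p + \<beta> + 1) (Suc (Suc p))"
      by (simp only: pochhammer_rec[of _ "Suc p"]) (simp add: add_ac one_plus_numeral)
    also have "\<dots> = pochhammer (real p + \<beta> + 1) p * (2 * real p + \<beta> + 1) * (2 * real p + \<beta> + 2)"
      by (simp only: pochhammer_Suc) (simp add: algebra_simps)
    finally show ?thesis .
  qed
  have l: "cf \<mu> \<beta> (Suc p) (p + 1) = pochhammer (real p + \<beta> + 2) (Suc p) / ((real p + 1) * fact p)"
    by (simp add: cf_def add_ac one_plus_numeral)
  have nz: "real p + 1 \<noteq> 0" "(fact p :: real) \<noteq> 0" by auto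
  have r: "cf (\<mu> + 2) \<beta> p p = pochhammer (real p + \<beta> + 1) p / fact p"
    by (simp add: cf_def add_ac)
  have "4 * (real p + 1) * (real p + \<beta> + 1) * cf \<mu> \<beta> (Suc p) (p + 1)
     = 4 * ((real p + \<beta> + 1) * pochhammer (real p + \<beta> + 2) (Suc p)) / fact p"
  proof -
    have "4 * (real p + 1) * (real p + \<beta> + 1) * (pochhammer (real p + \<beta> + 2) (Suc p) / ((real p + 1) * fact p))
      = ((real p + 1) * (4 * ((real p + \<beta> + 1) * pochhammer (real p + \<beta> + 2) (Suc p)))) / ((real p + 1) * fact p)"
      by (simp only: times_divide_eq_right mult_ac)
    also have "\<dots> = 4 * ((real p + \<beta> + 1) * pochhammer (real p + \<beta> + 2) (Suc p)) / fact p"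
      by (rule mult_divide_mult_cancel_left[OF nz(1)])
    finally show ?thesis unfolding l .
  qed
  also have "\<dots> = 4 * (2 * real (Suc p) + \<beta> - 1) * (2 * real (Suc p) + \<beta>) * cf (\<mu> + 2) \<beta> p p"
    unfolding e r by (simp add: field_simps)
  finally show ?thesis .
qed

lemma step:
  assumes j: "1 \<le> j" and b: "\<beta> = real m + real d / 2 - 1" and d: "d \<ge> 1"
  shows "\<exists>D. Lop m d (Qp \<mu> \<beta> j) = smult (4 * (2 * real j + \<beta> - 1) * (2 * real j + \<beta>)) (Qp (\<mu> + 2) \<beta> (j - 1)) + D
           \<and> (D = 0 \<or> degree D + 2 \<le> jac_j0 \<mu> \<beta> j)"
proof -
  define C where "C = 4 * (2 * real j + \<beta> - 1) * (2 * real j + \<beta>)"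
  define D where "D = Lop m d (Qp \<mu> \<beta> j) - smult C (Qp (\<mu> + 2) \<beta> (j - 1))"
  have "\<forall>p. jac_j0 \<mu> \<beta> j \<le> p + 1 \<longrightarrow> coeff D p = 0"
  proof (intro allI impI)
    fix p assume hp: "jac_j0 \<mu> \<beta> j \<le> p + 1"
    have cD: "coeff D p = 4 * (real p + 1) * (real p + \<beta> + 1) * cf \<mu> \<beta> j (p + 1)
       + 4 * (real p + 1) * (real p + 2) * cf \<mu> \<beta> j (p + 2) - C * cf (\<mu> + 2) \<beta> (j - 1) p"
      unfolding D_def by (simp add: coeff_Lop[OF b] coeff_Qp)
    consider "j \<le> p" | "p + 1 = j" | "p + 2 \<le> j" by linarith
    then show "coeff D p = 0"
    proof cases
      case 1 then show ?thesis unfolding cD using j by (simp add: cf_def)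
    next
      case 2
      then have "cf \<mu> \<beta> j (p + 2) = 0" by (simp add: cf_def)
      moreover have "4 * (real p + 1) * (real p + \<beta> + 1) * cf \<mu> \<beta> j (p + 1) = C * cf (\<mu> + 2) \<beta> (j - 1) p"
        using key_b[of p \<beta> \<mu>] 2 unfolding C_def by auto
      ultimately show ?thesis unfolding cD by simp
    next
      case 3
      then obtain t where jt: "j = p + 2 + t" using le_Suc_ex by blast
      have nz1: "real (p + 2 + t) + \<mu> + \<beta> + real p + 2 \<noteq> 0"
        using j0_nz[OF hp, of] 3 unfolding jt by (simp add: algebra_simps)
      have nz2: "pochhammer (real (p + 2 + t) + \<mu> + \<beta> + real p + 3) t \<noteq> 0"
      proof
        assume "pochhammer (real (p + 2 + t) + \<mu> + \<beta> + real p + 3) t = 0"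
        then obtain i where i: "i < t" "real (p + 2 + t) + \<mu> + \<beta> + real p + 3 = - real i"
          unfolding pochhammer_eq_0_iff by blast
        have "jac_j0 \<mu> \<beta> j \<le> p + 2 + i" using hp by simp
        from j0_nz[OF this] i show False unfolding jt by (simp add: algebra_simps)
      qed
      have nz3: "real (p + 2 + t) + \<beta> \<noteq> 0" using b d by simp
      have "p + 1 + t = j - 1" unfolding jt by simp
      then show ?thesis unfolding cD using key_c[OF nz1 nz2 nz3] unfolding C_def jt by simp
    qed
  qed
  from deg_from_coeffs[OF this] show ?thesis unfolding C_def D_def
    by (intro exI[of _ D]) (simp add: C_def D_def)
qed



lemma j0_eq: "1 \<le> m' \<Longrightarrow> m' \<le> j \<Longrightarrow> real m' = - real j - a - b \<Longrightarrow> jac_j0 a b j = m'"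
proof -
  assume h: "1 \<le> m'" "m' \<le> j" "real m' = - real j - a - b"
  then have "jac_j0 a b j = nat \<lfloor>- real j - a - b\<rfloor>" unfolding jac_j0_def by auto
  also have "\<dots> = m'" unfolding h(3)[symmetric] by simp
  finally show ?thesis .
qed

lemma j0_ne: "jac_j0 a b j \<noteq> 0 \<Longrightarrow> 1 \<le> jac_j0 a b j \<and> jac_j0 a b j \<le> j \<and> real (jac_j0 a b j) = - real j - a - b"
proof -
  assume "jac_j0 a b j \<noteq> 0"
  then obtain m' :: nat where m: "1 \<le> m'" "m' \<le> j" "real m' = - real j - a - b"
    unfolding jac_j0_def by (auto split: if_splits)
  then show ?thesis using j0_eq[OF m] by simp
qed

lemma j0_shift:
  assumes "jac_j0 (\<mu> + 2 * real k) \<beta> (j - k) \<noteq> 0" "k \<le> j"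
  shows "jac_j0 (\<mu> + 2 * real k) \<beta> (j - k) + k = jac_j0 \<mu> \<beta> j"
proof -
  note h = j0_ne[OF assms(1)]
  show ?thesis
    by (rule j0_eq[symmetric]) (use h assms(2) in \<open>auto simp: of_nat_diff\<close>)
qed

lemma Lop_lin: "Lop m d (smult c a + b) = smult c (Lop m d a) + Lop m d b"
  by (rule poly_eqI) (simp add: coeff_Lop[OF refl] algebra_simps)

lemma Lop_zero: "Lop m d 0 = 0"
  by (rule poly_eqI) (simp add: coeff_Lop[OF refl])

lemma Lop_Qp0: "Lop m d (Qp a \<beta> 0) = 0"
  by (rule poly_eqI) (simp add: coeff_Lop[OF refl] coeff_Qp cf_def)

lemma Lop_deg: "q = 0 \<or> degree q + n + 1 \<le> J \<Longrightarrow> Lop m d q = 0 \<or> degree (Lop m d q) + (n + 1) + 1 \<le> J"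
proof (cases "q = 0")
  case True then show ?thesis by (simp add: Lop_zero)
next
  case False
  assume h: "q = 0 \<or> degree q + n + 1 \<le> J"
  then have h': "degree q + n + 1 \<le> J" using False by simp
  have "\<forall>p. degree q + 1 \<le> p + 1 \<longrightarrow> coeff (Lop m d q) p = 0"
    by (auto simp: coeff_Lop[OF refl] coeff_eq_0)
  from deg_from_coeffs[OF this] h' show ?thesis by linarith
qed

lemma deg_add: "a = 0 \<or> degree a + n \<le> J \<Longrightarrow> b = 0 \<or> degree b + n \<le> J \<Longrightarrow> a + b = 0 \<or> degree (a + b) + n \<le> (J::nat)"
  using degree_add_le_max[of a b] by (cases "a = 0"; cases "b = 0") auto

lemma deg_smult: "a = 0 \<or> degree a + n \<le> J \<Longrightarrow> smult c a = 0 \<or> degree (smult c a) + n \<le> (J::nat)"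
  using degree_smult_le[of c a] by auto

lemma iter:
  assumes b: "\<beta> = real m + real d / 2 - 1" and d: "d \<ge> 1"
  shows "\<exists>q. (Lop m d ^^ k) (Qp \<mu> \<beta> j) = smult (4 ^ k * pochhammer (2 * real j + \<beta> + 1 - 2 * real k) (2 * k))
             (if k \<le> j then Qp (\<mu> + 2 * real k) \<beta> (j - k) else 0) + q
           \<and> (q = 0 \<or> degree q + k + 1 \<le> jac_j0 \<mu> \<beta> j)"
proof (induction k)
  case 0
  then show ?case by simp
next
  case (Suc k)
  then obtain q where q: "(Lop m d ^^ k) (Qp \<mu> \<beta> j) = smult (4 ^ k * pochhammer (2 * real j + \<beta> + 1 - 2 * real k) (2 * k))
             (if k \<le> j then Qp (\<mu> + 2 * real k) \<beta> (j - k) else 0) + q"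
     and qd: "q = 0 \<or> degree q + k + 1 \<le> jac_j0 \<mu> \<beta> j" by blast
  define c where "c = 4 ^ k * pochhammer (2 * real j + \<beta> + 1 - 2 * real k) (2 * k)"
  have L: "(Lop m d ^^ Suc k) (Qp \<mu> \<beta> j) = smult c (Lop m d (if k \<le> j then Qp (\<mu> + 2 * real k) \<beta> (j - k) else 0)) + Lop m d q"
    using q unfolding c_def by (simp add: Lop_lin)
  have Lq: "Lop m d q = 0 \<or> degree (Lop m d q) + Suc k + 1 \<le> jac_j0 \<mu> \<beta> j"
    using Lop_deg[OF qd] by simp
  show ?case
  proof (cases "Suc k \<le> j")
    case False
    then have "Lop m d (if k \<le> j then Qp (\<mu> + 2 * real k) \<beta> (j - k) else 0) = 0"
      by (auto simp: Lop_Qp0 Lop_zero)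
    then show ?thesis using L Lq False by (intro exI[of _ "Lop m d q"]) simp
  next
    case True
    have j1: "1 \<le> j - k" using True by simp
    obtain D where D: "Lop m d (Qp (\<mu> + 2 * real k) \<beta> (j - k)) = smult (4 * (2 * real (j - k) + \<beta> - 1) * (2 * real (j - k) + \<beta>)) (Qp (\<mu> + 2 * real k + 2) \<beta> (j - k - 1)) + D"
      and Dd: "D = 0 \<or> degree D + 2 \<le> jac_j0 (\<mu> + 2 * real k) \<beta> (j - k)"
      using step[OF j1 b d] by blast
    have Dd': "D = 0 \<or> degree D + Suc k + 1 \<le> jac_j0 \<mu> \<beta> j"
    proof (cases "D = 0")
      case False
      then have "jac_j0 (\<mu> + 2 * real k) \<beta> (j - k) \<noteq> 0" using Dd by auto
      from j0_shift[OF this] True Dd False show ?thesis by simp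
    qed simp
    have e1: "\<mu> + 2 * real k + 2 = \<mu> + 2 * real (Suc k)" by simp
    have e2: "j - k - 1 = j - Suc k" by simp
    have e3: "c * (4 * (2 * real (j - k) + \<beta> - 1) * (2 * real (j - k) + \<beta>))
        = 4 ^ Suc k * pochhammer (2 * real j + \<beta> + 1 - 2 * real (Suc k)) (2 * Suc k)"
    proof -
      have pr: "\<And>(A::real) n. pochhammer A (Suc (Suc n)) = A * (A + 1) * pochhammer (A + 2) n"
        by (simp add: pochhammer_rec add.assoc mult.assoc)
      have A1: "2 * real j + \<beta> + 1 - 2 * real (Suc k) = 2 * real (j - k) + \<beta> - 1"
        using True by (simp add: of_nat_diff)
      have A2: "2 * real (j - k) + \<beta> - 1 + 2 = 2 * real j + \<beta> + 1 - 2 * real k"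
        using True by (simp add: of_nat_diff)
      have A3: "2 * real (j - k) + \<beta> - 1 + 1 = 2 * real (j - k) + \<beta>" by simp
      have "pochhammer (2 * real j + \<beta> + 1 - 2 * real (Suc k)) (2 * Suc k)
          = pochhammer (2 * real (j - k) + \<beta> - 1) (Suc (Suc (2 * k)))" unfolding A1 by simp
      also have "\<dots> = (2 * real (j - k) + \<beta> - 1) * (2 * real (j - k) + \<beta>) * pochhammer (2 * real j + \<beta> + 1 - 2 * real k) (2 * k)"
        unfolding pr A2 A3 ..
      finally have e: "pochhammer (2 * real j + \<beta> + 1 - 2 * real (Suc k)) (2 * Suc k) = (2 * real (j - k) + \<beta> - 1) * (2 * real (j - k) + \<beta>) * pochhammer (2 * real j + \<beta> + 1 - 2 * real k) (2 * k)" .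
      show ?thesis unfolding c_def e by (simp only: power_Suc mult_ac)
    qed
    define C' where "C' = 4 * (2 * real (j - k) + \<beta> - 1) * (2 * real (j - k) + \<beta>)"
    have kj: "k \<le> j" using True by simp
    have "(Lop m d ^^ Suc k) (Qp \<mu> \<beta> j) = smult c (smult C' (Qp (\<mu> + 2 * real k + 2) \<beta> (j - k - 1)) + D) + Lop m d q"
      unfolding L C'_def using kj D by (simp only: if_True)
    also have "\<dots> = smult (c * C') (Qp (\<mu> + 2 * real k + 2) \<beta> (j - k - 1)) + (smult c D + Lop m d q)"
      by (simp add: smult_add_right add.assoc)
    also have "\<dots> = smult (4 ^ Suc k * pochhammer (2 * real j + \<beta> + 1 - 2 * real (Suc k)) (2 * Suc k)) (Qp (\<mu> + 2 * real (Suc k)) \<beta> (j - Suc k)) + (smult c D + Lop m d q)"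
      unfolding e1 e2 C'_def e3 ..
    finally have main: "(Lop m d ^^ Suc k) (Qp \<mu> \<beta> j) = smult (4 ^ Suc k * pochhammer (2 * real j + \<beta> + 1 - 2 * real (Suc k)) (2 * Suc k)) (if Suc k \<le> j then Qp (\<mu> + 2 * real (Suc k)) \<beta> (j - Suc k) else 0) + (smult c D + Lop m d q)"
      using True by simp
    have Dd2: "D = 0 \<or> degree D + (Suc k + 1) \<le> jac_j0 \<mu> \<beta> j" using Dd' by (metis add.assoc)
    have Lq2: "Lop m d q = 0 \<or> degree (Lop m d q) + (Suc k + 1) \<le> jac_j0 \<mu> \<beta> j" using Lq by (metis add.assoc)
    have deg0: "smult c D + Lop m d q = 0 \<or> degree (smult c D + Lop m d q) + (Suc k + 1) \<le> jac_j0 \<mu> \<beta> j"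
      by (rule deg_add[OF deg_smult[OF Dd2] Lq2])
    have deg: "smult c D + Lop m d q = 0 \<or> degree (smult c D + Lop m d q) + Suc k + 1 \<le> jac_j0 \<mu> \<beta> j"
      using deg0 by (metis add.assoc)
    show ?thesis using main deg by blast
  qed
qed



lemma gen_jacobi_full:
  "gen_jacobi a b (int j) t = (\<Sum>k\<le>j. pochhammer (real k + a + 1) (j - k)
        / (fact (j - k) * fact k * pochhammer (real j + a + b + real k + 1) (j - k))
        * ((t - 1) / 2) ^ k)"
proof -
  have le: "jac_j0 a b j \<le> j" using j0_ne[of a b j] by (cases "jac_j0 a b j = 0") auto
  have "gen_jacobi a b (int j) t = (\<Sum>k = jac_j0 a b j..j. pochhammer (real k + a + 1) (j - k)
        / (fact (j - k) * fact k * pochhammer (real j + a + b + real k + 1) (j - k))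
        * ((t - 1) / 2) ^ k)" unfolding gen_jacobi_def by simp
  also have "\<dots> = (\<Sum>k\<le>j. pochhammer (real k + a + 1) (j - k)
        / (fact (j - k) * fact k * pochhammer (real j + a + b + real k + 1) (j - k))
        * ((t - 1) / 2) ^ k)"
  proof (rule sum.mono_neutral_left)
    show "\<forall>i\<in>{..j} - {jac_j0 a b j..j}. pochhammer (real i + a + 1) (j - i)
        / (fact (j - i) * fact i * pochhammer (real j + a + b + real i + 1) (j - i))
        * ((t - 1) / 2) ^ i = 0"
      using j0_zero[of _ a b j] by auto
  qed auto
  finally show ?thesis .
qed

lemma Pbasis_Qp:
  fixes Y :: "real^'d::finite \<Rightarrow> real"
  shows "Pbasis \<mu> (int m + 2 * int j) (int j) Y x = poly (Qp \<mu> (real m + real CARD('d) / 2 - 1) j) ((norm x)\<^sup>2 - 1) * Y x"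
proof -
  define \<beta> where "\<beta> = real m + real CARD('d) / 2 - 1"
  have a1: "real_of_int (int m + 2 * int j - int j) + real CARD('d) / 2 = real j + \<beta> + 1"
    unfolding \<beta>_def by simp
  have a2: "real_of_int (int m + 2 * int j - 2 * int j) + real CARD('d) / 2 - 1 = \<beta>"
    unfolding \<beta>_def by simp
  have a3: "(2 * (norm x)\<^sup>2 - 1 - 1) / 2 = (norm x)\<^sup>2 - 1" by simp
  have "Pbasis \<mu> (int m + 2 * int j) (int j) Y x
     = pochhammer (real j + \<beta> + 1) j * (\<Sum>k\<le>j. pochhammer (real k + \<mu> + 1) (j - k)
        / (fact (j - k) * fact k * pochhammer (real j + \<mu> + \<beta> + real k + 1) (j - k))
        * ((norm x)\<^sup>2 - 1) ^ k) * Y x"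
    unfolding Pbasis_def a1 a2 gen_jacobi_full a3 by simp
  also have "\<dots> = poly (Qp \<mu> \<beta> j) ((norm x)\<^sup>2 - 1) * Y x"
    unfolding Qp_def poly_sum poly_monom cf_def
    by (simp add: sum_distrib_left algebra_simps)
  finally show ?thesis unfolding \<beta>_def .
qed



lemma poch_fact: "pochhammer (real r + 1) t * fact r = (fact (r + t) :: real)"
proof (induction t)
  case (Suc t)
  have "pochhammer (real r + 1) (Suc t) * fact r = (real r + 1 + real t) * (pochhammer (real r + 1) t * fact r)"
    by (simp add: pochhammer_Suc ac_simps)
  also have "\<dots> = (real r + 1 + real t) * fact (r + t)" using Suc.IH by simp
  also have "\<dots> = fact (r + Suc t)" by (simp add: algebra_simps)
  finally show ?case .
qed simp

lemma part_i_poly: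
  assumes s: "s \<le> j" and bpos: "\<beta> > -1"
  defines "Cc \<equiv> pochhammer (real j + \<beta> + 1) j * fact (j - s) / (pochhammer (real (j - s) + \<beta> + 1) (j - s) * fact j)"
  shows "Qp (- real s) \<beta> j = smult Cc (monom 1 s * Qp (real s) \<beta> (j - s))"
proof (rule poly_eqI)
  fix p
  show "coeff (Qp (- real s) \<beta> j) p = coeff (smult Cc (monom 1 s * Qp (real s) \<beta> (j - s))) p"
  proof (cases "p < s")
    case True
    have "pochhammer (real p + - real s + 1) (j - p) = 0"
      unfolding pochhammer_eq_0_iff using True s
      by (intro exI[of _ "s - 1 - p"]) (auto simp: of_nat_diff)
    then show ?thesis using True by (simp add: coeff_Qp coeff_monom_mult cf_def)
  next
    case False
    then obtain r where pr: "p = s + r" using le_Suc_ex not_less by blast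
    show ?thesis
    proof (cases "r \<le> j - s")
      case False
      then show ?thesis unfolding pr by (simp add: coeff_Qp coeff_monom_mult cf_def)
    next
      case True
      define t where "t = j - s - r"
      have jt: "j = s + r + t" unfolding t_def using True s by simp
      define P1 where "P1 = pochhammer (real j + \<beta> + 1) j"
      define P2 where "P2 = pochhammer (real (j - s) + \<beta> + 1) (j - s)"
      define D0 where "D0 = pochhammer (real j + \<beta> + real r + 1) t"
      have D0: "D0 \<noteq> 0" unfolding D0_def pochhammer_eq_0_iff using bpos by auto
      have P2: "P2 \<noteq> 0" unfolding P2_def pochhammer_eq_0_iff using bpos by auto
      have F: "(fact j :: real) \<noteq> 0" "(fact r :: real) \<noteq> 0" "(fact t :: real) \<noteq> 0" "(fact (s + r) :: real) \<noteq> 0" by auto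
      have l1: "pochhammer (real (s + r) + - real s + 1) t = fact (j - s) / fact r"
        using poch_fact[of r t] F unfolding jt by (simp add: field_simps)
      have l2: "pochhammer (real r + real s + 1) t = fact j / fact (s + r)"
        using poch_fact[of "s + r" t] F unfolding jt by (simp add: field_simps add_ac)
      have lhs: "coeff (Qp (- real s) \<beta> j) p = P1 * (fact (j - s) / fact r) / (fact t * fact (s + r) * D0)"
      proof -
        have e1: "j - (s + r) = t" unfolding jt by simp
        have e2: "real j + - real s + \<beta> + real (s + r) + 1 = real j + \<beta> + real r + 1" by simp
        show ?thesis unfolding pr coeff_Qp cf_def e1 e2 l1 P1_def D0_def using True s by simp
      qed
      have rhs: "coeff (Qp (real s) \<beta> (j - s)) r = P2 * (fact j / fact (s + r)) / (fact t * fact r * D0)"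
      proof -
        have e1: "j - s - r = t" unfolding t_def ..
        have e2: "real (j - s) + real s + \<beta> + real r + 1 = real j + \<beta> + real r + 1" using s by simp
        show ?thesis unfolding coeff_Qp cf_def e1 e2 l2 P2_def[symmetric] D0_def using True by simp
      qed
      have "coeff (smult Cc (monom 1 s * Qp (real s) \<beta> (j - s))) p = Cc * coeff (Qp (real s) \<beta> (j - s)) r"
        unfolding pr by (simp add: coeff_monom_mult)
      also have "\<dots> = coeff (Qp (- real s) \<beta> j) p"
        unfolding lhs rhs Cc_def P1_def[symmetric] P2_def[symmetric] using D0 P2 F by (simp add: field_simps)
      finally show ?thesis ..
    qed
  qed
qed

lemma const_i:
  fixes s j n m d :: nat
  assumes s: "s \<le> j" and n: "n = m + 2 * j"
  defines "\<beta> \<equiv> real m + real d / 2 - 1"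
  shows "pochhammer (1 - real n - real d / 2) j
              / (pochhammer (- real j) s * pochhammer (1 - real n - real d / 2 + 2 * real s) (j - s))
       = pochhammer (real j + \<beta> + 1) j * fact (j - s) / (pochhammer (real (j - s) + \<beta> + 1) (j - s) * fact j)"
proof -
  have a: "pochhammer (1 - real n - real d / 2) j = (-1) ^ j * pochhammer (real j + \<beta> + 1) j"
  proof -
    have e: "1 - real n - real d / 2 = - (real n + real d / 2 - 1)" by simp
    have e2: "real n + real d / 2 - 1 - real j + 1 = real j + \<beta> + 1" unfolding n \<beta>_def by simp
    show ?thesis unfolding e pochhammer_minus e2 ..
  qed
  have b: "pochhammer (- real j) s = (-1) ^ s * (fact j / fact (j - s))"
  proof -
    have "pochhammer (real j - real s + 1) s = pochhammer (real (j - s) + 1) s" using s by (simp add: of_nat_diff)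
    also have "\<dots> = fact j / fact (j - s)" using poch_fact[of "j - s" s] s by (simp add: field_simps)
    finally show ?thesis unfolding pochhammer_minus by simp
  qed
  have c: "pochhammer (1 - real n - real d / 2 + 2 * real s) (j - s) = (-1) ^ (j - s) * pochhammer (real (j - s) + \<beta> + 1) (j - s)"
  proof -
    have e: "1 - real n - real d / 2 + 2 * real s = - (real n + real d / 2 - 2 * real s - 1)" by simp
    have e2: "real n + real d / 2 - 2 * real s - 1 - real (j - s) + 1 = real (j - s) + \<beta> + 1"
      unfolding n \<beta>_def using s by (simp add: of_nat_diff)
    show ?thesis unfolding e pochhammer_minus e2 ..
  qed
  have sg: "(-1::real) ^ j = (-1) ^ s * (-1) ^ (j - s)" using s by (simp flip: power_add)
  have F: "(fact j :: real) \<noteq> 0" "(fact (j - s) :: real) \<noteq> 0" by auto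
  show ?thesis unfolding a b c sg using F by (simp add: field_simps)
qed



theorem lemma3p2:
  fixes s k n j :: nat and Y :: "real^'d::finite \<Rightarrow> real"
  assumes "s \<ge> 1"
    and "2 * j \<le> n"
    and "Y \<in> harmonic_space (n - 2 * j)"
  shows "(s \<le> j \<longrightarrow> (\<forall>x.
            Pbasis (- real s) (int n) (int j) Y x =
              pochhammer (1 - real n - real CARD('d) / 2) j
              / (pochhammer (- real j) s * pochhammer (1 - real n - real CARD('d) / 2 + 2 * real s) (j - s))
              * ((norm x)\<^sup>2 - 1) ^ s * Pbasis (real s) (int n - 2 * int s) (int j - int s) Y x))
       \<and> (\<exists>q :: real poly.
            (q = 0 \<or> int (degree q) \<le>
               int (jac_j0 (- real s) (real n - 2 * real j + real CARD('d) / 2 - 1) j) - int k - 1)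
          \<and> (s \<le> j + k \<longrightarrow> q = 0)
          \<and> (\<forall>x. (laplacian ^^ k) (Pbasis (- real s) (int n) (int j) Y) x =
                 4 ^ k * pochhammer (real n + real CARD('d) / 2 - 2 * real k) (2 * k)
                   * Pbasis (2 * real k - real s) (int n - 2 * int k) (int j - int k) Y x
                 + poly q ((norm x)\<^sup>2) * Y x))"
proof -
  define m where "m = n - 2 * j"
  define \<beta> where "\<beta> = real m + real CARD('d) / 2 - 1"
  have nm: "n = m + 2 * j" using assms(2) m_def by simp
  have "0 < CARD('d)" by (rule finite_UNIV_card_ge_0) simp
  then have d1: "CARD('d) \<ge> 1" by simp
  have Y: "Y \<in> harmonic_space m" using assms(3) m_def by simp
  have nint: "int n = int m + 2 * int j" using nm by simp
  have PQ: "Pbasis \<mu> (int n) (int j) Y = (\<lambda>x. poly (Qp \<mu> \<beta> j) ((norm x)\<^sup>2 - 1) * Y x)" for \<mu>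
    by (rule ext) (simp only: nint Pbasis_Qp \<beta>_def)
  have dr: "real CARD('d) \<ge> 1" using d1 by simp
  have bpos: "\<beta> > -1" using dr unfolding \<beta>_def by linarith
  have partI: "s \<le> j \<longrightarrow> (\<forall>x.
            Pbasis (- real s) (int n) (int j) Y x =
              pochhammer (1 - real n - real CARD('d) / 2) j
              / (pochhammer (- real j) s * pochhammer (1 - real n - real CARD('d) / 2 + 2 * real s) (j - s))
              * ((norm x)\<^sup>2 - 1) ^ s * Pbasis (real s) (int n - 2 * int s) (int j - int s) Y x)"
  proof (intro impI allI)
    fix x :: "real^'d" assume sj: "s \<le> j"
    have e1: "int n - 2 * int s = int m + 2 * int (j - s)" using sj nm by simp
    have e2: "int j - int s = int (j - s)" using sj by simp
    have K: "pochhammer (1 - real n - real CARD('d) / 2) j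
              / (pochhammer (- real j) s * pochhammer (1 - real n - real CARD('d) / 2 + 2 * real s) (j - s))
       = pochhammer (real j + \<beta> + 1) j * fact (j - s) / (pochhammer (real (j - s) + \<beta> + 1) (j - s) * fact j)"
      unfolding \<beta>_def by (rule const_i[OF sj nm])
    show "Pbasis (- real s) (int n) (int j) Y x =
              pochhammer (1 - real n - real CARD('d) / 2) j
              / (pochhammer (- real j) s * pochhammer (1 - real n - real CARD('d) / 2 + 2 * real s) (j - s))
              * ((norm x)\<^sup>2 - 1) ^ s * Pbasis (real s) (int n - 2 * int s) (int j - int s) Y x"
      unfolding PQ e1 e2 Pbasis_Qp K \<beta>_def[symmetric] part_i_poly[OF sj bpos]
      by (simp add: poly_monom)
  qed
  obtain q' where q': "(Lop m CARD('d) ^^ k) (Qp (- real s) \<beta> j) = smult (4 ^ k * pochhammer (2 * real j + \<beta> + 1 - 2 * real k) (2 * k))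
             (if k \<le> j then Qp (- real s + 2 * real k) \<beta> (j - k) else 0) + q'"
     and qd: "q' = 0 \<or> degree q' + k + 1 \<le> jac_j0 (- real s) \<beta> j"
    using iter[OF \<beta>_def d1] by blast
  define q where "q = pcompose q' [:-1, 1:]"
  have polyq: "poly q u = poly q' (u - 1)" for u by (simp add: q_def poly_pcompose)
  have degq: "degree q = degree q'" by (simp add: q_def degree_pcompose)
  have q0: "q = 0 \<longleftrightarrow> q' = 0" using pcompose_eq_0[of q' "[:-1,1:]"] by (auto simp: q_def)
  have bj: "real n - 2 * real j + real CARD('d) / 2 - 1 = \<beta>" by (simp add: \<beta>_def nm)
  have c1: "q = 0 \<or> int (degree q) \<le> int (jac_j0 (- real s) (real n - 2 * real j + real CARD('d) / 2 - 1) j) - int k - 1"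
    using qd unfolding bj q0 degq by auto
  have c2: "s \<le> j + k \<longrightarrow> q = 0"
  proof
    assume sjk: "s \<le> j + k"
    have "jac_j0 (- real s) \<beta> j \<le> k"
    proof (cases "jac_j0 (- real s) \<beta> j = 0")
      case False
      from j0_ne[OF False] have "real (jac_j0 (- real s) \<beta> j) = - real j + real s - \<beta>" by simp
      moreover have "\<beta> \<ge> - 1 / 2" using dr unfolding \<beta>_def by linarith
      moreover have "real s \<le> real j + real k" using sjk by simp
      ultimately have "real (jac_j0 (- real s) \<beta> j) < real k + 1" by linarith
      then show ?thesis by simp
    qed simp
    then show "q = 0" using qd q0 by auto
  qed
  have c3: "(laplacian ^^ k) (Pbasis (- real s) (int n) (int j) Y) x =
                 4 ^ k * pochhammer (real n + real CARD('d) / 2 - 2 * real k) (2 * k)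
                   * Pbasis (2 * real k - real s) (int n - 2 * int k) (int j - int k) Y x
                 + poly q ((norm x)\<^sup>2) * Y x" for x
  proof -
    have pc: "2 * real j + \<beta> + 1 - 2 * real k = real n + real CARD('d) / 2 - 2 * real k"
      by (simp add: \<beta>_def nm)
    have L: "(laplacian ^^ k) (Pbasis (- real s) (int n) (int j) Y) x
       = poly ((Lop m CARD('d) ^^ k) (Qp (- real s) \<beta> j)) ((norm x)\<^sup>2 - 1) * Y x"
      unfolding PQ radial_lap_iter[OF Y] ..
    have PB: "Pbasis (2 * real k - real s) (int n - 2 * int k) (int j - int k) Y x
       = poly (if k \<le> j then Qp (- real s + 2 * real k) \<beta> (j - k) else 0) ((norm x)\<^sup>2 - 1) * Y x"
    proof (cases "k \<le> j")
      case True
      have e1: "int n - 2 * int k = int m + 2 * int (j - k)" using True nm by simp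
      have e2: "int j - int k = int (j - k)" using True by simp
      have e3: "2 * real k - real s = - real s + 2 * real k" by simp
      show ?thesis using True unfolding e1 e2 e3 Pbasis_Qp \<beta>_def by simp
    next
      case False
      then show ?thesis by (simp add: Pbasis_def)
    qed
    show ?thesis unfolding L q' PB polyq pc[symmetric] by (simp add: algebra_simps)
  qed
  show ?thesis using partI c1 c2 c3 by blast
qed

end
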